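(* For all integers $n,m\ge 3$, $\gamma_p(C_n\times C_m)\le 4\left\lceil\frac{n}{4}\right\rceil\left\lceil\frac{m}{4}\right\rceil$.
   Context: All graphs are finite, simple and undirected. $C_n$ denotes the cycle of order $n$ and $G\times H$ the Cartesian product of graphs. For a graph $G$ without isolated vertices, a set $D\subseteq V(G)$ is a paired dominating set if every vertex outside $D$ has a neighbour in $D$ and the induced subgraph $G[D]$ has a perfect matching; $\gamma_p(G)$ is the minimum size of a paired dominating set. *)

theory Defs
  imports Complex_Main
begin

text \<open>A finite simple graph is given by a vertex set V and a symmetric irreflexive
adjacency relation E (only its restriction to V matters).\<close>

definition dominating :: "'a set \<Rightarrow> ('a \<Rightarrow> 'a \<Rightarrow> bool) \<Rightarrow> 'a set \<Rightarrow> bool" where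
  "dominating V E D \<longleftrightarrow> D \<subseteq> V \<and> (\<forall>v\<in>V - D. \<exists>u\<in>D. E v u)"

definition perfect_matching_on :: "('a \<Rightarrow> 'a \<Rightarrow> bool) \<Rightarrow> 'a set \<Rightarrow> 'a set set \<Rightarrow> bool" where
  "perfect_matching_on E D M \<longleftrightarrow>
     (\<forall>e\<in>M. \<exists>u v. e = {u, v} \<and> u \<in> D \<and> v \<in> D \<and> u \<noteq> v \<and> E u v) \<and>
     (\<forall>e\<in>M. \<forall>e'\<in>M. e \<noteq> e' \<longrightarrow> e \<inter> e' = {}) \<and>
     \<Union>M = D"

definition paired_dominating :: "'a set \<Rightarrow> ('a \<Rightarrow> 'a \<Rightarrow> bool) \<Rightarrow> 'a set \<Rightarrow> bool" where
  "paired_dominating V E D \<longleftrightarrow> dominating V E D \<and> (\<exists>M. perfect_matching_on E D M)"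

definition paired_domination_number :: "'a set \<Rightarrow> ('a \<Rightarrow> 'a \<Rightarrow> bool) \<Rightarrow> nat" where
  "paired_domination_number V E = (LEAST k. \<exists>D. paired_dominating V E D \<and> card D = k)"

definition cycle_adj :: "nat \<Rightarrow> nat \<Rightarrow> nat \<Rightarrow> bool" where
  "cycle_adj n i j \<longleftrightarrow> i < n \<and> j < n \<and> i \<noteq> j \<and> ((i + 1) mod n = j \<or> (j + 1) mod n = i)"

definition cart_prod_adj :: "('a \<Rightarrow> 'a \<Rightarrow> bool) \<Rightarrow> ('b \<Rightarrow> 'b \<Rightarrow> bool) \<Rightarrow> 'a \<times> 'b \<Rightarrow> 'a \<times> 'b \<Rightarrow> bool" where
  "cart_prod_adj E1 E2 x y \<longleftrightarrow>
     (fst x = fst y \<and> E2 (snd x) (snd y)) \<or> (snd x = snd y \<and> E1 (fst x) (fst y))"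

definition torus_vertices :: "nat \<Rightarrow> nat \<Rightarrow> (nat \<times> nat) set" where
  "torus_vertices n m = {0..<n} \<times> {0..<m}"

definition torus_adj :: "nat \<Rightarrow> nat \<Rightarrow> nat \<times> nat \<Rightarrow> nat \<times> nat \<Rightarrow> bool" where
  "torus_adj n m = cart_prod_adj (cycle_adj n) (cycle_adj m)"

end

theory Submission
  imports Defs
begin

lemma ex4: obtains k r where "(j::nat) = 4*k + r" "r < 4"
  using div_mult_mod_eq[of j 4] by (metis mod_less_divisor zero_less_numeral mult.commute add.commute)
lemma j4: obtains k r where "(j::nat) = 4*k + r" "j div 4 = k" "j mod 4 = r" "r = 0 \<or> r = 1 \<or> r = 2 \<or> r = 3"
proof -
  obtain k r where a: "j = 4*k + r" "r < 4" by (rule ex4)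
  have b: "j div 4 = k" "j mod 4 = r" using a by simp_all
  have c: "r = 0 \<or> r = 1 \<or> r = 2 \<or> r = 3" using a(2) by linarith
  show ?thesis by (rule that[OF a(1) b c])
qed
lemma m4: obtains T s where "(m::nat) = 4*T + s" "m mod 4 = s" "(m+3) div 4 = (if s = 0 then T else T+1)"
   "s = 0 \<or> s = 1 \<or> s = 2 \<or> s = 3"
proof -
  obtain T s where a: "m = 4*T + s" "m div 4 = T" "m mod 4 = s" "s = 0 \<or> s = 1 \<or> s = 2 \<or> s = 3" by (rule j4)
  have b: "(m+3) div 4 = (if s = 0 then T else T+1)" using a(1,4) by (elim disjE; simp)
  show ?thesis by (rule that[OF a(1) a(3) b a(4)])
qed

definition sP :: "nat \<Rightarrow> nat \<Rightarrow> nat" where "sP m q = min (4*q) (m-2)"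
definition tQ :: "nat \<Rightarrow> nat \<Rightarrow> nat" where
  "tQ m q = (if 4*q+2 \<le> m-2 then 4*q+2 else if m mod 4 = 1 then 0 else m-2)"
definition near :: "nat \<Rightarrow> nat \<Rightarrow> nat \<Rightarrow> bool" where
  "near m j x \<longleftrightarrow> j = x \<or> j+1 = x \<or> x+1 = j \<or> (j+1=m \<and> x=0) \<or> (j=0 \<and> x+1=m)"

lemma covQ_a: assumes "(m::nat) \<ge> 3" "j < m" "j mod 4 \<noteq> 0" shows "near m j (tQ m (j div 4)) \<or> near m j (tQ m (j div 4) + 1)"
proof -
  obtain k r where j: "j = 4*k + r" "j div 4 = k" "j mod 4 = r" and rr: "r = 0 \<or> r = 1 \<or> r = 2 \<or> r = 3" by (rule j4)
  obtain T s where mm: "m = 4*T + s" "m mod 4 = s" "(m+3) div 4 = (if s = 0 then T else T+1)" and ss: "s = 0 \<or> s = 1 \<or> s = 2 \<or> s = 3" by (rule m4)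
  show ?thesis using assms rr ss unfolding near_def tQ_def j(2,3) mm(2,3) unfolding j(1) mm(1)
    by (elim disjE; simp split: if_split; arith)
qed
lemma covQ_b: assumes "(m::nat) \<ge> 3" "j < m" "j mod 4 = 0" "j > 0" shows "near m j (tQ m (j div 4 - 1)) \<or> near m j (tQ m (j div 4 - 1) + 1)"
proof -
  obtain k r where j: "j = 4*k + r" "j div 4 = k" "j mod 4 = r" and rr: "r = 0 \<or> r = 1 \<or> r = 2 \<or> r = 3" by (rule j4)
  obtain T s where mm: "m = 4*T + s" "m mod 4 = s" "(m+3) div 4 = (if s = 0 then T else T+1)" and ss: "s = 0 \<or> s = 1 \<or> s = 2 \<or> s = 3" by (rule m4)
  show ?thesis using assms rr ss unfolding near_def tQ_def j(2,3) mm(2,3) unfolding j(1) mm(1)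
    by (elim disjE; simp split: if_split; arith)
qed
lemma covQ_c: assumes "(m::nat) \<ge> 3" shows "near m 0 (tQ m ((m+3) div 4 - 1)) \<or> near m 0 (tQ m ((m+3) div 4 - 1) + 1)"
proof -
  obtain T s where mm: "m = 4*T + s" "m mod 4 = s" "(m+3) div 4 = (if s = 0 then T else T+1)" and ss: "s = 0 \<or> s = 1 \<or> s = 2 \<or> s = 3" by (rule m4)
  show ?thesis using assms ss unfolding near_def tQ_def mm(2,3) unfolding mm(1)
    by (elim disjE; simp split: if_split; arith)
qed
lemma covP_a: assumes "(m::nat) \<ge> 3" "j < m" "j mod 4 \<noteq> 3" shows "near m j (sP m (j div 4)) \<or> near m j (sP m (j div 4) + 1)"
proof -
  obtain k r where j: "j = 4*k + r" "j div 4 = k" "j mod 4 = r" and rr: "r = 0 \<or> r = 1 \<or> r = 2 \<or> r = 3" by (rule j4)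
  obtain T s where mm: "m = 4*T + s" "m mod 4 = s" "(m+3) div 4 = (if s = 0 then T else T+1)" and ss: "s = 0 \<or> s = 1 \<or> s = 2 \<or> s = 3" by (rule m4)
  show ?thesis using assms rr ss unfolding near_def sP_def min_def j(2,3) mm(2,3) unfolding j(1) mm(1)
    by (elim disjE; simp split: if_split; arith)
qed
lemma covP_b: assumes "(m::nat) \<ge> 3" "j < m" "j mod 4 = 3" "j + 1 < m" shows "near m j (sP m (j div 4 + 1)) \<or> near m j (sP m (j div 4 + 1) + 1)"
proof -
  obtain k r where j: "j = 4*k + r" "j div 4 = k" "j mod 4 = r" and rr: "r = 0 \<or> r = 1 \<or> r = 2 \<or> r = 3" by (rule j4)
  obtain T s where mm: "m = 4*T + s" "m mod 4 = s" "(m+3) div 4 = (if s = 0 then T else T+1)" and ss: "s = 0 \<or> s = 1 \<or> s = 2 \<or> s = 3" by (rule m4)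
  show ?thesis using assms rr ss unfolding near_def sP_def min_def j(2,3) mm(2,3) unfolding j(1) mm(1)
    by (elim disjE; simp split: if_split; arith)
qed
lemma covP_c: assumes "(m::nat) \<ge> 3" "j + 1 = m" shows "near m j (sP m 0) \<or> near m j (sP m 0 + 1)"
proof -
  obtain T s where mm: "m = 4*T + s" "m mod 4 = s" "(m+3) div 4 = (if s = 0 then T else T+1)" and ss: "s = 0 \<or> s = 1 \<or> s = 2 \<or> s = 3" by (rule m4)
  show ?thesis using assms ss unfolding near_def sP_def min_def mm(2,3) unfolding mm(1)
    by (elim disjE; simp split: if_split; arith)
qed
lemma unionPQ_a: assumes "(m::nat) \<ge> 3" "j < m" "j mod 4 < 2" shows "j = sP m (j div 4) \<or> j = sP m (j div 4) + 1"
proof -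
  obtain k r where j: "j = 4*k + r" "j div 4 = k" "j mod 4 = r" and rr: "r = 0 \<or> r = 1 \<or> r = 2 \<or> r = 3" by (rule j4)
  obtain T s where mm: "m = 4*T + s" "m mod 4 = s" "(m+3) div 4 = (if s = 0 then T else T+1)" and ss: "s = 0 \<or> s = 1 \<or> s = 2 \<or> s = 3" by (rule m4)
  show ?thesis using assms rr ss unfolding sP_def min_def j(2,3) mm(2,3) unfolding j(1) mm(1)
    by (elim disjE; simp split: if_split; arith)
qed
lemma unionPQ_b: assumes "(m::nat) \<ge> 3" "j < m" "j mod 4 \<ge> 2" shows "j = tQ m (j div 4) \<or> j = tQ m (j div 4) + 1"
proof -
  obtain k r where j: "j = 4*k + r" "j div 4 = k" "j mod 4 = r" and rr: "r = 0 \<or> r = 1 \<or> r = 2 \<or> r = 3" by (rule j4)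
  obtain T s where mm: "m = 4*T + s" "m mod 4 = s" "(m+3) div 4 = (if s = 0 then T else T+1)" and ss: "s = 0 \<or> s = 1 \<or> s = 2 \<or> s = 3" by (rule m4)
  show ?thesis using assms rr ss unfolding tQ_def j(2,3) mm(2,3) unfolding j(1) mm(1)
    by (elim disjE; simp split: if_split; arith)
qed
lemma sP_lt: "(m::nat) \<ge> 3 \<Longrightarrow> sP m q + 1 < m" unfolding sP_def by linarith
lemma tQ_lt: assumes "(m::nat) \<ge> 3" shows "tQ m q + 1 < m"
proof -
  obtain T s where mm: "m = 4*T + s" "m mod 4 = s" "(m+3) div 4 = (if s = 0 then T else T+1)" and ss: "s = 0 \<or> s = 1 \<or> s = 2 \<or> s = 3" by (rule m4)
  show ?thesis using assms ss unfolding tQ_def mm(2,3) unfolding mm(1)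
    by (elim disjE; simp split: if_split; arith)
qed
lemma sP_sep: assumes "(m::nat) \<ge> 3" "q < q'" "q' < (m+3) div 4" shows "sP m q + 1 < sP m q'"
proof -
  obtain T s where mm: "m = 4*T + s" "m mod 4 = s" "(m+3) div 4 = (if s = 0 then T else T+1)" and ss: "s = 0 \<or> s = 1 \<or> s = 2 \<or> s = 3" by (rule m4)
  show ?thesis using assms ss unfolding sP_def min_def mm(2,3) unfolding mm(1)
    by (elim disjE; simp split: if_split; arith)
qed
lemma tQ_sep: assumes "(m::nat) \<ge> 3" "q < q'" "q' < (m+3) div 4" shows "tQ m q + 1 < tQ m q' \<or> tQ m q' + 1 < tQ m q"
proof -
  obtain T s where mm: "m = 4*T + s" "m mod 4 = s" "(m+3) div 4 = (if s = 0 then T else T+1)" and ss: "s = 0 \<or> s = 1 \<or> s = 2 \<or> s = 3" by (rule m4)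
  show ?thesis using assms ss unfolding tQ_def mm(2,3) unfolding mm(1)
    by (elim disjE; simp split: if_split; arith)
qed
lemma idx_lt: assumes "(m::nat) \<ge> 3" "j < m" shows "j div 4 < (m+3) div 4"
proof -
  obtain k r where j: "j = 4*k + r" "j div 4 = k" "j mod 4 = r" and rr: "r = 0 \<or> r = 1 \<or> r = 2 \<or> r = 3" by (rule j4)
  obtain T s where mm: "m = 4*T + s" "m mod 4 = s" "(m+3) div 4 = (if s = 0 then T else T+1)" and ss: "s = 0 \<or> s = 1 \<or> s = 2 \<or> s = 3" by (rule m4)
  show ?thesis using assms rr ss unfolding j(2,3) mm(2,3) unfolding j(1) mm(1)
    by (elim disjE; simp split: if_split; arith)
qed
definition R2c :: "nat \<Rightarrow> nat \<Rightarrow> bool" where "R2c n i \<longleftrightarrow> i < n \<and> (i mod 4 = 2 \<or> (i+1 = n \<and> i mod 4 = 1))"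
lemma m42: "Suc (Suc (4 * (k::nat))) mod 4 = 2" by presburger
lemma rows1: "(n::nat) \<ge> 3 \<Longrightarrow> i < n \<Longrightarrow> i mod 4 = 1 \<Longrightarrow> \<not> R2c n i \<Longrightarrow>
  (i - 1 < n \<and> (i - 1) mod 4 = 0 \<and> near n i (i - 1)) \<and> R2c n (i+1) \<and> near n i (i+1)"
proof -
  assume a: "(n::nat) \<ge> 3" "i < n" "i mod 4 = 1" "\<not> R2c n i"
  obtain k where k: "i = 4*k+1" using a(3) by (metis add.commute div_mult_mod_eq mult.commute)
  have "i + 1 < n" using a unfolding R2c_def by auto
  thus ?thesis using a k unfolding near_def R2c_def by (simp add: m42)
qed
lemma rows3: "(n::nat) \<ge> 3 \<Longrightarrow> i < n \<Longrightarrow> i mod 4 = 3 \<Longrightarrow> i + 1 < n \<Longrightarrow>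
  (i + 1 < n \<and> (i + 1) mod 4 = 0 \<and> near n i (i + 1)) \<and> R2c n (i - 1) \<and> near n i (i - 1)"
proof -
  assume a: "(n::nat) \<ge> 3" "i < n" "i mod 4 = 3" "i + 1 < n"
  obtain k where k: "i = 4*k+3" using a(3) by (metis add.commute div_mult_mod_eq mult.commute)
  show ?thesis using a k unfolding near_def R2c_def by (simp add: m42)
qed
lemma rows3': "(n::nat) \<ge> 3 \<Longrightarrow> i < n \<Longrightarrow> i mod 4 = 3 \<Longrightarrow> i + 1 = n \<Longrightarrow>
  (0 < n \<and> (0::nat) mod 4 = 0 \<and> near n i 0) \<and> R2c n (i - 1) \<and> near n i (i - 1)"
proof -
  assume a: "(n::nat) \<ge> 3" "i < n" "i mod 4 = 3" "i + 1 = n"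
  obtain k where k: "i = 4*k+3" using a(3) by (metis add.commute div_mult_mod_eq mult.commute)
  show ?thesis using a k unfolding near_def R2c_def by (simp add: m42)
qed
lemma R2card: assumes "R2c n i" shows "i div 4 < (n+3) div 4 \<and> i = min (4*(i div 4)+2) (n-1)"
proof -
  obtain k r where j: "i = 4*k + r" "i div 4 = k" "i mod 4 = r" and rr: "r = 0 \<or> r = 1 \<or> r = 2 \<or> r = 3" by (rule j4)
  obtain T s where mm: "n = 4*T + s" "n mod 4 = s" "(n+3) div 4 = (if s = 0 then T else T+1)" and ss: "s = 0 \<or> s = 1 \<or> s = 2 \<or> s = 3" by (rule m4)
  show ?thesis using assms rr ss unfolding R2c_def min_def j(2,3) mm(2,3) unfolding j(1) mm(1)
    by (elim disjE; simp split: if_split; arith)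
qed
lemma R1card: assumes "(i::nat) < n" "i mod 4 = 0" shows "i div 4 < (n+3) div 4 \<and> i = 4*(i div 4)"
proof -
  obtain k r where j: "i = 4*k + r" "i div 4 = k" "i mod 4 = r" and rr: "r = 0 \<or> r = 1 \<or> r = 2 \<or> r = 3" by (rule j4)
  obtain T s where mm: "n = 4*T + s" "n mod 4 = s" "(n+3) div 4 = (if s = 0 then T else T+1)" and ss: "s = 0 \<or> s = 1 \<or> s = 2 \<or> s = 3" by (rule m4)
  show ?thesis using assms rr ss unfolding j(2,3) mm(2,3) unfolding j(1) mm(1)
    by (elim disjE; simp split: if_split; arith)
qed
lemma near_adj: "(n::nat) \<ge> 3 \<Longrightarrow> i < n \<Longrightarrow> x < n \<Longrightarrow> near n i x \<Longrightarrow> i \<noteq> x \<Longrightarrow> cycle_adj n i x"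
  unfolding near_def cycle_adj_def by (elim disjE; simp)
lemma ceil4: "nat (ceiling (real n / 4)) = (n+3) div 4"
proof -
  have a: "4 * ((n+3) div 4) \<ge> n" "4 * ((n+3) div 4) < n + 4" by linarith+
  have "ceiling (real n / 4) = int ((n+3) div 4)"
    apply (rule ceiling_unique) using a by (simp_all add: field_simps)
  thus ?thesis by simp
qed

definition PP :: "nat \<Rightarrow> nat set" where "PP m = {j. \<exists>q<(m+3) div 4. j = sP m q \<or> j = sP m q + 1}"
definition QQ :: "nat \<Rightarrow> nat set" where "QQ m = {j. \<exists>q<(m+3) div 4. j = tQ m q \<or> j = tQ m q + 1}"
definition R1 :: "nat \<Rightarrow> nat set" where "R1 n = {i. i < n \<and> i mod 4 = 0}"
definition R2 :: "nat \<Rightarrow> nat set" where "R2 n = {i. R2c n i}"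
definition ed :: "nat \<Rightarrow> nat \<Rightarrow> (nat \<times> nat) set" where "ed i x = {(i,x),(i,x+1)}"
definition DD :: "nat \<Rightarrow> nat \<Rightarrow> (nat \<times> nat) set" where "DD n m = (R1 n \<times> PP m) \<union> (R2 n \<times> QQ m)"
definition MM :: "nat \<Rightarrow> nat \<Rightarrow> (nat \<times> nat) set set" where
  "MM n m = (\<lambda>(i,q). ed i (sP m q)) ` (R1 n \<times> {..<(m+3) div 4}) \<union> (\<lambda>(i,q). ed i (tQ m q)) ` (R2 n \<times> {..<(m+3) div 4})"

lemma idx_b: assumes "(m::nat) \<ge> 3" "j mod 4 = 3" "j + 1 < m" shows "j div 4 + 1 < (m+3) div 4"
proof -
  obtain k r where j: "j = 4*k + r" "j div 4 = k" "j mod 4 = r" and rr: "r = 0 \<or> r = 1 \<or> r = 2 \<or> r = 3" by (rule j4)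
  obtain T s where mm: "m = 4*T + s" "m mod 4 = s" "(m+3) div 4 = (if s = 0 then T else T+1)" and ss: "s = 0 \<or> s = 1 \<or> s = 2 \<or> s = 3" by (rule m4)
  show ?thesis using assms rr ss unfolding j(2,3) mm(2,3) unfolding j(1) mm(1)
    by (elim disjE; simp split: if_split; arith)
qed
lemma idx_c: assumes "(m::nat) \<ge> 3" "j < m" shows "j div 4 - 1 < (m+3) div 4"
proof -
  obtain k r where j: "j = 4*k + r" "j div 4 = k" "j mod 4 = r" and rr: "r = 0 \<or> r = 1 \<or> r = 2 \<or> r = 3" by (rule j4)
  obtain T s where mm: "m = 4*T + s" "m mod 4 = s" "(m+3) div 4 = (if s = 0 then T else T+1)" and ss: "s = 0 \<or> s = 1 \<or> s = 2 \<or> s = 3" by (rule m4)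
  show ?thesis using assms rr ss unfolding j(2,3) mm(2,3) unfolding j(1) mm(1)
    by (elim disjE; simp split: if_split; arith)
qed
lemma idx_d: assumes "(m::nat) \<ge> 3" shows "(m+3) div 4 - 1 < (m+3) div 4"
proof -
  obtain T s where mm: "m = 4*T + s" "m mod 4 = s" "(m+3) div 4 = (if s = 0 then T else T+1)" and ss: "s = 0 \<or> s = 1 \<or> s = 2 \<or> s = 3" by (rule m4)
  show ?thesis using assms ss unfolding mm(2,3) unfolding mm(1)
    by (elim disjE; simp split: if_split; arith)
qed
lemma idx_0: assumes "(m::nat) \<ge> 3" shows "0 < (m+3) div 4"
proof -
  obtain T s where mm: "m = 4*T + s" "m mod 4 = s" "(m+3) div 4 = (if s = 0 then T else T+1)" and ss: "s = 0 \<or> s = 1 \<or> s = 2 \<or> s = 3" by (rule m4)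
  show ?thesis using assms ss unfolding mm(2,3) unfolding mm(1)
    by (elim disjE; simp split: if_split; arith)
qed

lemma colP: assumes "(m::nat) \<ge> 3" "j < m" shows "\<exists>x\<in>PP m. near m j x"
proof -
  have "\<exists>q<(m+3) div 4. near m j (sP m q) \<or> near m j (sP m q + 1)"
  proof (cases "j mod 4 = 3")
    case False thus ?thesis using covP_a[OF assms False] idx_lt[OF assms] by blast
  next
    case True
    show ?thesis
    proof (cases "j + 1 < m")
      case T: True thus ?thesis using covP_b[OF assms True T] idx_b[OF assms(1) True T] by blast
    next
      case False hence "j + 1 = m" using assms by linarith
      thus ?thesis using covP_c[OF assms(1)] idx_0[OF assms(1)] by blast
    qed
  qed
  thus ?thesis unfolding PP_def by blast
qed

lemma colQ: assumes "(m::nat) \<ge> 3" "j < m" shows "\<exists>x\<in>QQ m. near m j x"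
proof -
  have "\<exists>q<(m+3) div 4. near m j (tQ m q) \<or> near m j (tQ m q + 1)"
  proof (cases "j mod 4 = 0")
    case False thus ?thesis using covQ_a[OF assms False] idx_lt[OF assms] by blast
  next
    case True
    show ?thesis
    proof (cases "j > 0")
      case T: True thus ?thesis using covQ_b[OF assms True T] idx_c[OF assms] by blast
    next
      case False hence "j = 0" by simp
      thus ?thesis using covQ_c[OF assms(1)] idx_d[OF assms(1)] by blast
    qed
  qed
  thus ?thesis unfolding QQ_def by blast
qed

lemma PQ: assumes "(m::nat) \<ge> 3" "j < m" shows "j \<in> PP m \<or> j \<in> QQ m"
proof (cases "j mod 4 < 2")
  case True thus ?thesis using unionPQ_a[OF assms True] idx_lt[OF assms] unfolding PP_def by blast
next
  case False hence h: "j mod 4 \<ge> 2" by simp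
  thus ?thesis using unionPQ_b[OF assms h] idx_lt[OF assms] unfolding QQ_def by blast
qed

lemma PP_lt: assumes "(m::nat) \<ge> 3" "x \<in> PP m" shows "x < m"
proof -
  obtain q where "x = sP m q \<or> x = sP m q + 1" using assms(2) unfolding PP_def by auto
  moreover have "sP m q + 1 < m" using sP_lt[OF assms(1)] .
  ultimately show ?thesis by linarith
qed
lemma QQ_lt: assumes "(m::nat) \<ge> 3" "x \<in> QQ m" shows "x < m"
proof -
  obtain q where "x = tQ m q \<or> x = tQ m q + 1" using assms(2) unfolding QQ_def by auto
  moreover have "tQ m q + 1 < m" using tQ_lt[OF assms(1)] .
  ultimately show ?thesis by linarith
qed

lemma R12: "i \<in> R1 n \<Longrightarrow> i \<in> R2 n \<Longrightarrow> False"
  unfolding R1_def R2_def R2c_def by auto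

lemma torus_row: "cycle_adj m j x \<Longrightarrow> torus_adj n m (i,j) (i,x)"
  unfolding torus_adj_def cart_prod_adj_def by simp
lemma torus_col: "cycle_adj n i x \<Longrightarrow> torus_adj n m (i,j) (x,j)"
  unfolding torus_adj_def cart_prod_adj_def by simp

lemma dom: assumes "n \<ge> 3" "m \<ge> 3" shows "dominating (torus_vertices n m) (torus_adj n m) (DD n m)"
  unfolding dominating_def
proof (intro conjI ballI)
  show "DD n m \<subseteq> torus_vertices n m"
    unfolding DD_def torus_vertices_def R1_def R2_def R2c_def using PP_lt[OF assms(2)] QQ_lt[OF assms(2)] by auto
next
  fix v assume v: "v \<in> torus_vertices n m - DD n m"
  obtain i j where ij: "v = (i,j)" by (cases v)
  have i: "i < n" and j: "j < m" using v ij unfolding torus_vertices_def by auto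
  have nd: "(i,j) \<notin> DD n m" using v ij by simp
  show "\<exists>u\<in>DD n m. torus_adj n m v u"
  proof (cases "i \<in> R1 n")
    case True
    hence "j \<notin> PP m" using nd unfolding DD_def by auto
    moreover obtain x where x: "x \<in> PP m" "near m j x" using colP[OF assms(2) j] by blast
    ultimately have "cycle_adj m j x" using near_adj[OF assms(2) j PP_lt[OF assms(2) x(1)] x(2)] by auto
    moreover have "(i,x) \<in> DD n m" using True x unfolding DD_def by auto
    ultimately show ?thesis using ij torus_row by blast
  next
    case F1: False
    show ?thesis
    proof (cases "i \<in> R2 n")
      case True
      hence "j \<notin> QQ m" using nd unfolding DD_def by auto
      moreover obtain x where x: "x \<in> QQ m" "near m j x" using colQ[OF assms(2) j] by blast
      ultimately have "cycle_adj m j x" using near_adj[OF assms(2) j QQ_lt[OF assms(2) x(1)] x(2)] by auto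
      moreover have "(i,x) \<in> DD n m" using True x unfolding DD_def by auto
      ultimately show ?thesis using ij torus_row by blast
    next
      case F2: False
      have m0: "i mod 4 \<noteq> 0" using F1 i unfolding R1_def by auto
      have nr: "\<not> R2c n i" using F2 unfolding R2_def by auto
      have "i mod 4 \<noteq> 2" using nr i unfolding R2c_def by auto
      hence "i mod 4 = 1 \<or> i mod 4 = 3" using m0 by linarith
      hence "\<exists>i1 i2. i1 < n \<and> i1 mod 4 = 0 \<and> near n i i1 \<and> R2c n i2 \<and> near n i i2"
      proof
        assume h: "i mod 4 = 1"
        have r: "(i - 1 < n \<and> (i - 1) mod 4 = 0 \<and> near n i (i - 1)) \<and> R2c n (i+1) \<and> near n i (i+1)"
          using rows1[OF assms(1) i h nr] .
        show ?thesis apply (rule exI[of _ "i - 1"], rule exI[of _ "i + 1"]) using r by simp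
      next
        assume h: "i mod 4 = 3"
        show ?thesis
        proof (cases "i + 1 < n")
          case True
          have r: "(i + 1 < n \<and> (i + 1) mod 4 = 0 \<and> near n i (i + 1)) \<and> R2c n (i - 1) \<and> near n i (i - 1)"
            using rows3[OF assms(1) i h True] .
          show ?thesis apply (rule exI[of _ "i + 1"], rule exI[of _ "i - 1"]) using r by simp
        next
          case False hence "i + 1 = n" using i by linarith
          have r: "(0 < n \<and> (0::nat) mod 4 = 0 \<and> near n i 0) \<and> R2c n (i - 1) \<and> near n i (i - 1)"
            using rows3'[OF assms(1) i h \<open>i + 1 = n\<close>] .
          show ?thesis apply (rule exI[of _ "0"], rule exI[of _ "i - 1"]) using r by simp
        qed
      qed
      then obtain i1 where "\<exists>i2. i1 < n \<and> i1 mod 4 = 0 \<and> near n i i1 \<and> R2c n i2 \<and> near n i i2" by (rule exE)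
      then obtain i2 where c0: "i1 < n \<and> i1 mod 4 = 0 \<and> near n i i1 \<and> R2c n i2 \<and> near n i i2" by (rule exE)
      have c: "i1 < n" "i1 mod 4 = 0" "near n i i1" "R2c n i2" "near n i i2"
        using c0 by simp_all
      have i1R: "i1 \<in> R1 n" using c(1,2) unfolding R1_def by simp
      have i2R: "i2 \<in> R2 n" using c(4) unfolding R2_def by simp
      have i2n: "i2 < n" using c(4) unfolding R2c_def by blast
      have ne1: "i \<noteq> i1" using i1R F1 by blast
      have ne2: "i \<noteq> i2" using i2R F2 by blast
      have a1: "cycle_adj n i i1" by (rule near_adj[OF assms(1) i c(1) c(3) ne1])
      have a2: "cycle_adj n i i2" by (rule near_adj[OF assms(1) i i2n c(5) ne2])
      show ?thesis
      proof (cases "j \<in> PP m")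
        case True
        hence "(i1,j) \<in> DD n m" using i1R unfolding DD_def by auto
        thus ?thesis using ij torus_col[OF a1] by blast
      next
        case False hence "j \<in> QQ m" using PQ[OF assms(2) j] by auto
        hence "(i2,j) \<in> DD n m" using i2R unfolding DD_def by auto
        thus ?thesis using ij torus_col[OF a2] by blast
      qed
    qed
  qed
qed

lemma ed_disj: "i \<noteq> i' \<or> x + 1 < x' \<or> x' + 1 < x \<Longrightarrow> ed i x \<inter> ed i' x' = {}"
  unfolding ed_def by auto

lemma cyc_succ: "x + 1 < m \<Longrightarrow> cycle_adj m x (x+1)"
  unfolding cycle_adj_def by simp

lemma MM_cases: "e \<in> MM n m \<Longrightarrow> (\<exists>i q. i \<in> R1 n \<and> q < (m+3) div 4 \<and> e = ed i (sP m q)) \<or> (\<exists>i q. i \<in> R2 n \<and> q < (m+3) div 4 \<and> e = ed i (tQ m q))"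
  unfolding MM_def by auto
lemma MM_I1: "i \<in> R1 n \<Longrightarrow> q < (m+3) div 4 \<Longrightarrow> ed i (sP m q) \<in> MM n m"
  unfolding MM_def by (rule UnI1, rule image_eqI[of _ _ "(i,q)"]) simp_all
lemma MM_I2: "i \<in> R2 n \<Longrightarrow> q < (m+3) div 4 \<Longrightarrow> ed i (tQ m q) \<in> MM n m"
  unfolding MM_def by (rule UnI2, rule image_eqI[of _ _ "(i,q)"]) simp_all

lemma edge_ok: assumes "x + 1 < m" "(i,x) \<in> D" "(i,x+1) \<in> D"
  shows "\<exists>u v. ed i x = {u, v} \<and> u \<in> D \<and> v \<in> D \<and> u \<noteq> v \<and> torus_adj n m u v"
proof (rule exI[of _ "(i,x)"], rule exI[of _ "(i,x+1)"])
  have "torus_adj n m (i,x) (i,x+1)" by (rule torus_row, rule cyc_succ, rule assms(1))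
  thus "ed i x = {(i,x), (i,x+1)} \<and> (i,x) \<in> D \<and> (i,x+1) \<in> D \<and> (i,x) \<noteq> (i,x+1) \<and> torus_adj n m (i,x) (i,x+1)"
    using assms(2,3) unfolding ed_def by simp
qed

lemma match: assumes "n \<ge> 3" "m \<ge> 3" shows "perfect_matching_on (torus_adj n m) (DD n m) (MM n m)"
  unfolding perfect_matching_on_def
proof (intro conjI)
  show "\<forall>e\<in>MM n m. \<exists>u v. e = {u, v} \<and> u \<in> DD n m \<and> v \<in> DD n m \<and> u \<noteq> v \<and> torus_adj n m u v"
  proof
    fix e assume "e \<in> MM n m"
    from MM_cases[OF this]
    show "\<exists>u v. e = {u, v} \<and> u \<in> DD n m \<and> v \<in> DD n m \<and> u \<noteq> v \<and> torus_adj n m u v"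
    proof (elim disjE exE conjE)
      fix i q assume a: "i \<in> R1 n" "q < (m+3) div 4" "e = ed i (sP m q)"
      have "(i, sP m q) \<in> DD n m" "(i, sP m q + 1) \<in> DD n m" using a(1,2) unfolding DD_def PP_def by auto
      thus ?thesis using edge_ok[OF sP_lt[OF assms(2)]] a(3) by simp
    next
      fix i q assume a: "i \<in> R2 n" "q < (m+3) div 4" "e = ed i (tQ m q)"
      have "(i, tQ m q) \<in> DD n m" "(i, tQ m q + 1) \<in> DD n m" using a(1,2) unfolding DD_def QQ_def by auto
      thus ?thesis using edge_ok[OF tQ_lt[OF assms(2)]] a(3) by simp
    qed
  qed
next
  have sPs: "sP m q + 1 < sP m q' \<or> sP m q' + 1 < sP m q" if "q \<noteq> q'" "q < (m+3) div 4" "q' < (m+3) div 4" for q q'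
  proof (cases "q < q'")
    case True thus ?thesis using sP_sep[OF assms(2) True that(3)] by simp
  next
    case False hence qq: "q' < q" using that by linarith
    show ?thesis using sP_sep[OF assms(2) qq that(2)] by simp
  qed
  have tQs: "tQ m q + 1 < tQ m q' \<or> tQ m q' + 1 < tQ m q" if "q \<noteq> q'" "q < (m+3) div 4" "q' < (m+3) div 4" for q q'
  proof (cases "q < q'")
    case True thus ?thesis using tQ_sep[OF assms(2) True that(3)] by simp
  next
    case False hence qq: "q' < q" using that by linarith
    show ?thesis using tQ_sep[OF assms(2) qq that(2)] by (simp add: disj_commute)
  qed
  show "\<forall>e\<in>MM n m. \<forall>e'\<in>MM n m. e \<noteq> e' \<longrightarrow> e \<inter> e' = {}"
  proof (intro ballI impI)
    fix e e' assume e: "e \<in> MM n m" and e': "e' \<in> MM n m" and ne: "e \<noteq> e'"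
    from MM_cases[OF e] show "e \<inter> e' = {}"
    proof (elim disjE exE conjE)
      fix i q assume a: "i \<in> R1 n" "q < (m+3) div 4" "e = ed i (sP m q)"
      from MM_cases[OF e'] show ?thesis
      proof (elim disjE exE conjE)
        fix i' q' assume b: "i' \<in> R1 n" "q' < (m+3) div 4" "e' = ed i' (sP m q')"
        show ?thesis
        proof (cases "i = i'")
          case False thus ?thesis using a(3) b(3) ed_disj by simp
        next
          case True
          hence "q \<noteq> q'" using ne a(3) b(3) by auto
          from sPs[OF this a(2) b(2)] show ?thesis using a(3) b(3) ed_disj by simp
        qed
      next
        fix i' q' assume b: "i' \<in> R2 n" "q' < (m+3) div 4" "e' = ed i' (tQ m q')"
        have "i \<noteq> i'" using a(1) b(1) R12 by auto
        thus ?thesis using a(3) b(3) ed_disj by simp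
      qed
    next
      fix i q assume a: "i \<in> R2 n" "q < (m+3) div 4" "e = ed i (tQ m q)"
      from MM_cases[OF e'] show ?thesis
      proof (elim disjE exE conjE)
        fix i' q' assume b: "i' \<in> R1 n" "q' < (m+3) div 4" "e' = ed i' (sP m q')"
        have "i \<noteq> i'" using a(1) b(1) R12 by auto
        thus ?thesis using a(3) b(3) ed_disj by simp
      next
        fix i' q' assume b: "i' \<in> R2 n" "q' < (m+3) div 4" "e' = ed i' (tQ m q')"
        show ?thesis
        proof (cases "i = i'")
          case False thus ?thesis using a(3) b(3) ed_disj by simp
        next
          case True
          hence "q \<noteq> q'" using ne a(3) b(3) by auto
          from tQs[OF this a(2) b(2)] show ?thesis using a(3) b(3) ed_disj by simp
        qed
      qed
    qed
  qed
next
  show "\<Union>(MM n m) = DD n m"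
  proof
    show "\<Union>(MM n m) \<subseteq> DD n m"
    proof
      fix v assume "v \<in> \<Union>(MM n m)"
      then obtain e where e: "e \<in> MM n m" "v \<in> e" by (rule UnionE)
      from MM_cases[OF e(1)] show "v \<in> DD n m"
      proof (elim disjE exE conjE)
        fix i q assume a: "i \<in> R1 n" "q < (m+3) div 4" "e = ed i (sP m q)"
        have "(i, sP m q) \<in> DD n m" "(i, sP m q + 1) \<in> DD n m" using a(1,2) unfolding DD_def PP_def by auto
        thus ?thesis using e(2) a(3) unfolding ed_def by auto
      next
        fix i q assume a: "i \<in> R2 n" "q < (m+3) div 4" "e = ed i (tQ m q)"
        have "(i, tQ m q) \<in> DD n m" "(i, tQ m q + 1) \<in> DD n m" using a(1,2) unfolding DD_def QQ_def by auto
        thus ?thesis using e(2) a(3) unfolding ed_def by auto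
      qed
    qed
  next
    show "DD n m \<subseteq> \<Union>(MM n m)"
    proof
      fix v assume "v \<in> DD n m"
      then consider (a) i j q where "v = (i,j)" "i \<in> R1 n" "q < (m+3) div 4" "j = sP m q \<or> j = sP m q + 1"
        | (b) i j q where "v = (i,j)" "i \<in> R2 n" "q < (m+3) div 4" "j = tQ m q \<or> j = tQ m q + 1"
        unfolding DD_def PP_def QQ_def by auto
      thus "v \<in> \<Union>(MM n m)"
      proof cases
        case a
        have "ed i (sP m q) \<in> MM n m" using MM_I1 a(2,3) .
        moreover have "v \<in> ed i (sP m q)" using a(1,4) unfolding ed_def by auto
        ultimately show ?thesis by (rule UnionI)
      next
        case b
        have "ed i (tQ m q) \<in> MM n m" using MM_I2 b(2,3) .
        moreover have "v \<in> ed i (tQ m q)" using b(1,4) unfolding ed_def by auto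
        ultimately show ?thesis by (rule UnionI)
      qed
    qed
  qed
qed

lemma card_two_images: "card (f ` {..<(k::nat)} \<union> g ` {..<k}) \<le> 2 * k"
proof -
  have "card (f ` {..<k} \<union> g ` {..<k}) \<le> card (f ` {..<k}) + card (g ` {..<k})" by (rule card_Un_le)
  moreover have "card (f ` {..<k}) \<le> k" using card_image_le[of "{..<k}" f] by simp
  moreover have "card (g ` {..<k}) \<le> k" using card_image_le[of "{..<k}" g] by simp
  ultimately show ?thesis by linarith
qed
lemma cardPP: "card (PP m) \<le> 2 * ((m+3) div 4)"
proof -
  have "PP m = sP m ` {..<(m+3) div 4} \<union> (\<lambda>q. sP m q + 1) ` {..<(m+3) div 4}" unfolding PP_def by auto
  thus ?thesis using card_two_images by simp
qed
lemma cardQQ: "card (QQ m) \<le> 2 * ((m+3) div 4)"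
proof -
  have "QQ m = tQ m ` {..<(m+3) div 4} \<union> (\<lambda>q. tQ m q + 1) ` {..<(m+3) div 4}" unfolding QQ_def by auto
  thus ?thesis using card_two_images by simp
qed
lemma card_sub_image: assumes "A \<subseteq> f ` {..<(k::nat)}" shows "card A \<le> k"
proof -
  have "card A \<le> card (f ` {..<k})" using assms by (intro card_mono) simp_all
  also have "\<dots> \<le> k" using card_image_le[of "{..<k}" f] by simp
  finally show ?thesis .
qed
lemma cardR1: "card (R1 n) \<le> (n+3) div 4"
proof (rule card_sub_image)
  show "R1 n \<subseteq> (\<lambda>p. 4*p) ` {..<(n+3) div 4}"
  proof
    fix i assume "i \<in> R1 n"
    hence "i < n" "i mod 4 = 0" unfolding R1_def by simp_all
    from R1card[OF this] show "i \<in> (\<lambda>p. 4*p) ` {..<(n+3) div 4}" by (intro image_eqI[of _ _ "i div 4"]) simp_all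
  qed
qed
lemma cardR2: "card (R2 n) \<le> (n+3) div 4"
proof (rule card_sub_image)
  show "R2 n \<subseteq> (\<lambda>p. min (4*p+2) (n-1)) ` {..<(n+3) div 4}"
  proof
    fix i assume "i \<in> R2 n"
    hence "R2c n i" unfolding R2_def by simp
    from R2card[OF this] show "i \<in> (\<lambda>p. min (4*p+2) (n-1)) ` {..<(n+3) div 4}" by (intro image_eqI[of _ _ "i div 4"]) simp_all
  qed
qed

lemma arith4: "(a::nat) * (2 * b) + a * (2 * b) = 4 * a * b" by algebra

lemma cardDD: "card (DD n m) \<le> 4 * ((n+3) div 4) * ((m+3) div 4)"
proof -
  have "card (DD n m) \<le> card (R1 n \<times> PP m) + card (R2 n \<times> QQ m)" unfolding DD_def by (rule card_Un_le)
  also have "\<dots> = card (R1 n) * card (PP m) + card (R2 n) * card (QQ m)" by (simp add: card_cartesian_product)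
  also have "\<dots> \<le> ((n+3) div 4) * (2 * ((m+3) div 4)) + ((n+3) div 4) * (2 * ((m+3) div 4))"
    by (intro add_mono mult_le_mono cardR1 cardR2 cardPP cardQQ)
  also have "\<dots> = 4 * ((n+3) div 4) * ((m+3) div 4)" using arith4 .
  finally show ?thesis .
qed

theorem theorem5p1:
  fixes n m :: nat
  assumes "n \<ge> 3" and "m \<ge> 3"
  shows "paired_domination_number (torus_vertices n m) (torus_adj n m)
           \<le> 4 * nat (ceiling (real n / 4)) * nat (ceiling (real m / 4))"
proof -
  have pd: "paired_dominating (torus_vertices n m) (torus_adj n m) (DD n m)"
    unfolding paired_dominating_def by (intro conjI exI[of _ "MM n m"] dom[OF assms] match[OF assms])
  have "paired_domination_number (torus_vertices n m) (torus_adj n m) \<le> card (DD n m)"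
    unfolding paired_domination_number_def by (rule Least_le, rule exI[of _ "DD n m"], simp add: pd)
  also have "\<dots> \<le> 4 * ((n+3) div 4) * ((m+3) div 4)" by (rule cardDD)
  finally have c: "paired_domination_number (torus_vertices n m) (torus_adj n m) \<le> 4 * ((n+3) div 4) * ((m+3) div 4)" .
  show ?thesis unfolding ceil4 by (rule c)
qed

end
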